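(* Suppose the folded ribbon knot $\mathcal{K}_{w,F}$ is a topological annulus. Consider a piece of the ribbon of $\mathcal{K}_{w,F}$ corresponding to a part of the knot diagram which has no self-intersections and contains exactly two vertices. Then the contribution of that piece of ribbon to the ribbon linking number is $\pm1$ if and only if its two folds have the same sign.
   Context: For a polygonal knot diagram $\mathcal{K}$ and width $w>0$, the folded ribbon knot $\mathcal{K}_{w,F}$ is a flat strip of width $w$ centred on $\mathcal{K}$, folded at each vertex along a fold line through the vertex perpendicular to the bisector of the angle between the adjacent edges (a piecewise-linear immersion of an annulus or Möbius band whose only singularities are pairwise disjoint fold lines); it is an annulus when $\mathcal{K}$ has an even number of edges. The ribbon linking number is the linking number of the oriented knot diagram with one boundary component of the ribbon (oriented parallel to $\mathcal{K}$), i.e. one half of the sum of the signs (right-hand rule) of the crossings between the diagram and that boundary component; the contribution of a piece of ribbon is one half the sum of those crossing signs occurring in that piece. At a fold with fold angle in $(0,\pi)$ the two crossings between the ribbon boundary and the knot diagram have a common sign, called the sign of the fold: with $\mathcal{K}$ oriented, left underfolds and right overfolds have sign $+1$, left overfolds and right underfolds have sign $-1$ (a fold at $v_i$, incoming edge $e_{i-1}$, outgoing $e_i$, is left/right according as $e_i$ turns left/right of $e_{i-1}$, and is an underfold if the layer of ribbon along $e_i$ lies beneath the layer along $e_{i-1}$, an overfold otherwise). *)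

theory Defs
  imports "HOL-Analysis.Analysis"
begin

text \<open>Model of a polygonal knot diagram in the plane (identified with the complex numbers):
  vertices v k (indices taken periodically), edge e_k from v k to v (Suc k).
  The over/under structure of the folded ribbon (which includes the crossing information of
  the diagram and the fold types) is recorded by a relation abv j k, meaning that the layer
  of ribbon along edge e_j lies abv the layer along e_k where they overlap (j, k < n).\<close>

definition cross :: "complex \<Rightarrow> complex \<Rightarrow> real" where
  "cross a b = Im (cnj a * b)"

definition edir :: "(nat \<Rightarrow> complex) \<Rightarrow> nat \<Rightarrow> complex" where
  "edir v k = v (Suc k) - v k"

definition unitdir :: "(nat \<Rightarrow> complex) \<Rightarrow> nat \<Rightarrow> complex" where
  "unitdir v k = edir v k / complex_of_real (cmod (edir v k))"

definition lnormal :: "(nat \<Rightarrow> complex) \<Rightarrow> nat \<Rightarrow> complex" where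
  "lnormal v k = \<i> * unitdir v k"

text \<open>direction of the fold line at vertex v k (k \<ge> 1): perpendicular to the bisector
  (direction unitdir v k - unitdir v (k-1)) of the angle between the adjacent edges\<close>
definition fold_dir :: "(nat \<Rightarrow> complex) \<Rightarrow> nat \<Rightarrow> complex" where
  "fold_dir v k = unitdir v (k - 1) + unitdir v k"

definition line_meet :: "complex \<Rightarrow> complex \<Rightarrow> complex \<Rightarrow> complex \<Rightarrow> complex" where
  "line_meet p u c m = p + complex_of_real (cross m (c - p) / cross m u) * u"

text \<open>signed offset (w.r.t. the left normal) of the chosen boundary component (s = 1 or -1)
  on the layer of ribbon along edge e_j; it alternates at each fold, so for an even number of
  edges this is a boundary component of the annulus\<close>
definition boff :: "real \<Rightarrow> real \<Rightarrow> nat \<Rightarrow> real" where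
  "boff s w j = s * (-1) ^ j * w / 2"

definition bfold :: "(nat \<Rightarrow> complex) \<Rightarrow> real \<Rightarrow> real \<Rightarrow> nat \<Rightarrow> nat \<Rightarrow> complex" where
  "bfold v s w j k = line_meet (v j + complex_of_real (boff s w j) * lnormal v j)
                       (unitdir v j) (v k) (fold_dir v k)"

text \<open>The piece of ribbon over the part of the diagram from a (inside e_i) through v (i+1),
  v (i+2) to b (inside e_(i+2)), cut perpendicularly at a and b.\<close>
definition piece_bseg ::
  "(nat \<Rightarrow> complex) \<Rightarrow> real \<Rightarrow> real \<Rightarrow> nat \<Rightarrow> complex \<Rightarrow> complex \<Rightarrow> nat \<Rightarrow> complex set" where
  "piece_bseg v s w i a b j =
     (if j = i then closed_segment (a + complex_of_real (boff s w i) * lnormal v i) (bfold v s w i (i+1))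
      else if j = i + 1 then closed_segment (bfold v s w (i+1) (i+1)) (bfold v s w (i+1) (i+2))
      else if j = i + 2 then closed_segment (bfold v s w (i+2) (i+2))
                               (b + complex_of_real (boff s w (i+2)) * lnormal v (i+2))
      else {})"

definition piece_crossings ::
  "(nat \<Rightarrow> complex) \<Rightarrow> nat \<Rightarrow> real \<Rightarrow> real \<Rightarrow> nat \<Rightarrow> complex \<Rightarrow> complex \<Rightarrow> (nat \<times> nat \<times> complex) set" where
  "piece_crossings v n s w i a b =
     {(j, k, x). j \<in> {i, i+1, i+2} \<and> k < n \<and> k \<noteq> j mod n \<and>
        x \<in> piece_bseg v s w i a b j \<inter> closed_segment (v k) (v (Suc k))}"

text \<open>sign of a crossing between the boundary (on layer j, oriented parallel to the knot)
  and the diagram edge e_k, by the right-hand rule: sgn (cross over_direction under_direction)\<close>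
definition xsign :: "(nat \<Rightarrow> complex) \<Rightarrow> nat \<Rightarrow> (nat \<Rightarrow> nat \<Rightarrow> bool) \<Rightarrow> nat \<Rightarrow> nat \<Rightarrow> real" where
  "xsign v n abv j k =
     (if abv (j mod n) k then sgn (cross (edir v j) (edir v k))
      else sgn (cross (edir v k) (edir v j)))"

definition piece_contribution ::
  "(nat \<Rightarrow> complex) \<Rightarrow> nat \<Rightarrow> (nat \<Rightarrow> nat \<Rightarrow> bool) \<Rightarrow> real \<Rightarrow> real \<Rightarrow> nat \<Rightarrow> complex \<Rightarrow> complex \<Rightarrow> real" where
  "piece_contribution v n abv s w i a b =
     (1/2) * (\<Sum>c\<in>piece_crossings v n s w i a b. xsign v n abv (fst c) (fst (snd c)))"

text \<open>fold at vertex v k (k \<ge> 1), incoming edge e_(k-1), outgoing e_k\<close>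
definition left_fold :: "(nat \<Rightarrow> complex) \<Rightarrow> nat \<Rightarrow> bool" where
  "left_fold v k \<longleftrightarrow> cross (edir v (k - 1)) (edir v k) > 0"

definition underfold :: "nat \<Rightarrow> (nat \<Rightarrow> nat \<Rightarrow> bool) \<Rightarrow> nat \<Rightarrow> bool" where
  "underfold n abv k \<longleftrightarrow> abv ((k - 1) mod n) (k mod n)"

definition fold_sign :: "(nat \<Rightarrow> complex) \<Rightarrow> nat \<Rightarrow> (nat \<Rightarrow> nat \<Rightarrow> bool) \<Rightarrow> nat \<Rightarrow> int" where
  "fold_sign v n abv k = (if left_fold v k \<longleftrightarrow> underfold n abv k then 1 else -1)"

end

theory Submission
  imports Defs
begin

lemma unit_cnj: fixes u :: complex assumes "cmod u = 1" shows "cnj u * u = 1"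
proof -
  have "u * cnj u = complex_of_real ((cmod u)^2)" by (metis complex_norm_square)
  thus ?thesis using assms by (simp add: mult.commute)
qed

lemma frame_seg:
  fixes u V p q z :: complex assumes u: "cmod u = 1"
  shows "z \<in> closed_segment (V + u*p) (V + u*q) \<longleftrightarrow> cnj u * (z - V) \<in> closed_segment p q"
proof -
  have c: "cnj u * u = 1" using unit_cnj[OF u] .
  have e: "\<And>t. (1 - t) *\<^sub>R (V + u*p) + t *\<^sub>R (V + u*q) = V + u * ((1 - t) *\<^sub>R p + t *\<^sub>R q)"
    by (simp add: scaleR_conv_of_real algebra_simps)
  have f: "\<And>\<zeta>. z = V + u * \<zeta> \<longleftrightarrow> cnj u * (z - V) = \<zeta>"
  proof
    fix \<zeta> assume "z = V + u * \<zeta>" thus "cnj u * (z - V) = \<zeta>" using c by (simp add: mult.assoc[symmetric])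
  next
    fix \<zeta> assume "cnj u * (z - V) = \<zeta>"
    hence "u * (cnj u * (z - V)) = u * \<zeta>" by simp
    hence "z - V = u * \<zeta>" using c by (simp add: mult.assoc[symmetric] mult.commute[of u])
    thus "z = V + u * \<zeta>" by (simp add: algebra_simps)
  qed
  show ?thesis unfolding in_segment e f by blast
qed

lemma cross_rot: fixes w y x :: complex assumes "cmod w = 1"
  shows "cross (w*y) (w*x) = Im (cnj y * x)"
proof -
  have e: "cnj (w*y) * (w*x) = (cnj w * w) * (cnj y * x)" by (simp add: algebra_simps)
  show ?thesis unfolding cross_def e unit_cnj[OF assms] by simp
qed

lemma lm_core:
  fixes w y c p0 :: complex and lam h :: real
  assumes w: "cmod w = 1" and y: "Im y \<noteq> 0" and c: "c - p0 = of_real lam * w"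
  shows "line_meet (p0 + of_real h * (\<i> * w)) w c (w*y) = c + w * Complex (h * Re y / Im y) h"
proof -
  have cw: "cross (w*y) w = - Im y" using cross_rot[OF w, of y 1] by simp
  have "c - (p0 + of_real h * (\<i> * w)) = w * (of_real lam - of_real h * \<i>)" using c by (simp add: algebra_simps)
  hence cp: "cross (w*y) (c - (p0 + of_real h * (\<i> * w))) = - lam * Im y - h * Re y"
    using cross_rot[OF w, of y "of_real lam - of_real h * \<i>"] by (simp add: algebra_simps)
  have r: "cross (w*y) (c - (p0 + of_real h * (\<i> * w))) / cross (w*y) w = lam + h * Re y / Im y"
    unfolding cp cw using y by (simp add: field_simps)
  have "line_meet (p0 + of_real h * (\<i> * w)) w c (w*y) = p0 + of_real h * (\<i> * w) + of_real (lam + h * Re y / Im y) * w"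
    unfolding line_meet_def r ..
  also have "\<dots> = c + w * Complex (h * Re y / Im y) h"
    using c by (simp add: complex_eq_iff algebra_simps)
  finally show ?thesis .
qed

lemma seg_param: fixes V d x :: complex
  shows "x \<in> closed_segment V (V + d) \<longleftrightarrow> (\<exists>t. 0 \<le> t \<and> t \<le> 1 \<and> x = V + of_real t * d)"
  unfolding in_segment by (simp add: scaleR_conv_of_real algebra_simps)

lemma seg_param2: fixes V d x :: complex
  shows "x \<in> closed_segment (V - d) V \<longleftrightarrow> (\<exists>t. 0 \<le> t \<and> t \<le> 1 \<and> x = V - of_real t * d)"
proof -
  have "x \<in> closed_segment (V - d) V \<longleftrightarrow> x \<in> closed_segment V (V + (- d))"
    by (simp add: closed_segment_commute)
  also have "\<dots> \<longleftrightarrow> (\<exists>t. 0 \<le> t \<and> t \<le> 1 \<and> x = V + of_real t * (-d))" by (rule seg_param)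
  finally show ?thesis by simp
qed

lemma fold_in:
  fixes V u u' x :: complex and L' h \<xi> :: real
  assumes u: "cmod u = 1" and u': "cmod u' = 1" and S: "Im (cnj u * u') \<noteq> 0" and h: "h \<noteq> 0"
    and L': "\<bar>h / Im (cnj u * u')\<bar> \<le> L'"
    and xi: "\<xi> < h * Re (cnj u * u') / Im (cnj u * u')"
  shows "(x \<in> closed_segment (V + u * Complex \<xi> h)
              (V + u * Complex (h * (1 + Re (cnj u * u')) / Im (cnj u * u')) h)
          \<and> x \<in> closed_segment V (V + of_real L' * u'))
        \<longleftrightarrow> (h * Im (cnj u * u') > 0 \<and> x = V + of_real (h / Im (cnj u * u')) * u')"
proof -
  define \<rho> where "\<rho> = cnj u * u'"
  define C where "C = Re \<rho>"
  define S where "S = Im \<rho>"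
  have S0: "S \<noteq> 0" using S by (simp add: S_def \<rho>_def)
  have L'S: "\<bar>h / S\<bar> \<le> L'" using L' by (simp add: S_def \<rho>_def)
  have xiS: "\<xi> < h * C / S" using xi by (simp add: S_def C_def \<rho>_def)
  have cu: "cnj u * u = 1" by (rule unit_cnj[OF u])
  have seg: "closed_segment (Complex \<xi> h) (Complex (h * (1 + C) / S) h)
      = {z. Im z = h \<and> Re z \<in> closed_segment \<xi> (h * (1 + C) / S)}"
    by (subst closed_segment_same_Im) auto
  have key: "cnj u * (of_real r * u') = of_real r * \<rho>" for r :: real
    by (simp add: \<rho>_def algebra_simps)
  show ?thesis unfolding \<rho>_def[symmetric] C_def[symmetric] S_def[symmetric]
  proof
    assume A: "x \<in> closed_segment (V + u * Complex \<xi> h) (V + u * Complex (h * (1 + C) / S) h)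
          \<and> x \<in> closed_segment V (V + of_real L' * u')"
    then obtain t where t: "0 \<le> t" "t \<le> 1" "x = V + of_real t * (of_real L' * u')"
      using seg_param by blast
    have "cnj u * (x - V) \<in> closed_segment (Complex \<xi> h) (Complex (h * (1 + C) / S) h)"
      using A frame_seg[OF u] by blast
    hence "Im (cnj u * (x - V)) = h" unfolding seg by simp
    moreover have "cnj u * (x - V) = of_real (t * L') * \<rho>" using t(3) key[of "t*L'"] by (simp add: algebra_simps)
    ultimately have tl: "t * L' * S = h" by (simp add: S_def)
    have L'0: "L' \<ge> 0" using L'S by linarith
    have "t * L' \<ge> 0" using t L'0 by simp
    moreover have tS: "t * L' = h / S" using tl S0 by (simp add: field_simps)
    ultimately have "h / S > 0" using h S0 by (auto simp: less_le)
    hence "h * S > 0" by (simp add: zero_less_divide_iff zero_less_mult_iff)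
    moreover have "x = V + of_real (h / S) * u'" using t(3) tS by (simp add: algebra_simps flip: of_real_mult)
    ultimately show "h * S > 0 \<and> x = V + of_real (h / S) * u'" by blast
  next
    assume B: "h * S > 0 \<and> x = V + of_real (h / S) * u'"
    hence hS: "h / S > 0" by (simp add: zero_less_divide_iff zero_less_mult_iff)
    hence L'p: "L' > 0" using L'S by linarith
    have "x \<in> closed_segment V (V + of_real L' * u')"
      unfolding seg_param
    proof (rule exI[of _ "(h / S) / L'"], intro conjI)
      show "0 \<le> h / S / L'" using hS L'p by (metis divide_nonneg_pos less_eq_real_def)
      have "h / S \<le> L'" using hS L'S by (metis abs_of_pos)
      thus "h / S / L' \<le> 1" using L'p by (simp only: divide_le_eq_1) simp
      show "x = V + complex_of_real (h / S / L') * (complex_of_real L' * u')"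
        using B L'p by (simp add: field_simps)
    qed
    moreover have "cnj u * (x - V) \<in> closed_segment (Complex \<xi> h) (Complex (h * (1 + C) / S) h)"
    proof -
      have e: "cnj u * (x - V) = of_real (h / S) * \<rho>" using B key by simp
      have "Im (of_real (h / S) * \<rho>) = h" using S0 by (simp add: S_def)
      moreover have "Re (of_real (h / S) * \<rho>) = h * C / S" by (simp add: C_def)
      moreover have "h * C / S \<in> closed_segment \<xi> (h * (1 + C) / S)"
      proof -
        have "h * (1 + C) / S = h * C / S + h / S" by (simp add: add_divide_distrib algebra_simps)
        thus ?thesis using xiS hS unfolding closed_segment_eq_real_ivl by simp
      qed
      ultimately show ?thesis unfolding seg e by (simp add: C_def)
    qed
    hence "x \<in> closed_segment (V + u * Complex \<xi> h) (V + u * Complex (h * (1 + C) / S) h)"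
      using frame_seg[OF u] by blast
    ultimately show "x \<in> closed_segment (V + u * Complex \<xi> h) (V + u * Complex (h * (1 + C) / S) h)
          \<and> x \<in> closed_segment V (V + of_real L' * u')" by blast
  qed
qed

lemma fold_out:
  fixes V u u' x :: complex and L h \<eta> :: real
  assumes u: "cmod u = 1" and u': "cmod u' = 1" and S: "Im (cnj u * u') \<noteq> 0" and h: "h \<noteq> 0"
    and L: "\<bar>h / Im (cnj u * u')\<bar> \<le> L"
    and eta: "h * Re (cnj u * u') / Im (cnj u * u') < \<eta>"
  shows "(x \<in> closed_segment (V + u' * Complex (h * (1 + Re (cnj u * u')) / Im (cnj u * u')) (- h))
              (V + u' * Complex \<eta> (- h))
          \<and> x \<in> closed_segment (V - of_real L * u) V)
        \<longleftrightarrow> (h * Im (cnj u * u') < 0 \<and> x = V + of_real (h / Im (cnj u * u')) * u)"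
proof -
  define \<rho> where "\<rho> = cnj u * u'"
  define C where "C = Re \<rho>"
  define S where "S = Im \<rho>"
  have S0: "S \<noteq> 0" using S by (simp add: S_def \<rho>_def)
  have LS: "\<bar>h / S\<bar> \<le> L" using L by (simp add: S_def \<rho>_def)
  have etaS: "h * C / S < \<eta>" using eta by (simp add: S_def C_def \<rho>_def)
  have seg: "closed_segment (Complex (h * (1 + C) / S) (-h)) (Complex \<eta> (-h))
      = {z. Im z = -h \<and> Re z \<in> closed_segment (h * (1 + C) / S) \<eta>}"
    by (subst closed_segment_same_Im) auto
  have key: "cnj u' * (of_real r * u) = of_real r * cnj \<rho>" for r :: real
    by (simp add: \<rho>_def algebra_simps)
  show ?thesis unfolding \<rho>_def[symmetric] C_def[symmetric] S_def[symmetric]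
  proof
    assume A: "x \<in> closed_segment (V + u' * Complex (h * (1 + C) / S) (-h)) (V + u' * Complex \<eta> (-h))
          \<and> x \<in> closed_segment (V - of_real L * u) V"
    then obtain t where t: "0 \<le> t" "t \<le> 1" "x = V - of_real t * (of_real L * u)"
      using seg_param2 by blast
    have "cnj u' * (x - V) \<in> closed_segment (Complex (h * (1 + C) / S) (-h)) (Complex \<eta> (-h))"
      using A frame_seg[OF u'] by blast
    hence "Im (cnj u' * (x - V)) = -h" unfolding seg by simp
    moreover have "cnj u' * (x - V) = - (of_real (t * L) * cnj \<rho>)"
    proof -
      have "x - V = - (of_real (t * L) * u)" using t(3) by simp
      hence "cnj u' * (x - V) = - (cnj u' * (of_real (t * L) * u))" by simp
      thus ?thesis unfolding key .
    qed
    ultimately have tl: "t * L * S = - h" by (simp add: S_def)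
    have L0: "L \<ge> 0" using LS by linarith
    have "t * L \<ge> 0" using t L0 by simp
    moreover have tS: "t * L = - (h / S)" using tl S0 by (simp add: field_simps)
    ultimately have "h / S < 0" using h S0 by (auto simp: less_le)
    hence "h * S < 0" by (simp add: divide_less_0_iff mult_less_0_iff)
    moreover have "x = V + of_real (h / S) * u" using t(3) tS by (simp add: algebra_simps flip: of_real_mult)
    ultimately show "h * S < 0 \<and> x = V + of_real (h / S) * u" by blast
  next
    assume B: "h * S < 0 \<and> x = V + of_real (h / S) * u"
    hence hS: "h / S < 0" by (simp add: divide_less_0_iff mult_less_0_iff)
    hence Lp: "L > 0" using LS by linarith
    have "x \<in> closed_segment (V - of_real L * u) V"
      unfolding seg_param2
    proof (rule exI[of _ "- (h / S) / L"], intro conjI)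
      show "0 \<le> - (h / S) / L" using hS Lp by (metis divide_nonneg_pos less_eq_real_def neg_0_less_iff_less)
      have "- (h / S) \<le> L" using hS LS by (metis abs_of_neg)
      thus "- (h / S) / L \<le> 1" using Lp by (simp only: divide_le_eq_1) simp
      show "x = V - complex_of_real (- (h / S) / L) * (complex_of_real L * u)"
        using B Lp by (simp add: field_simps)
    qed
    moreover have "cnj u' * (x - V) \<in> closed_segment (Complex (h * (1 + C) / S) (-h)) (Complex \<eta> (-h))"
    proof -
      have e: "cnj u' * (x - V) = of_real (h / S) * cnj \<rho>" using B key by simp
      have "Im (of_real (h / S) * cnj \<rho>) = -h" using S0 by (simp add: S_def)
      moreover have "Re (of_real (h / S) * cnj \<rho>) = h * C / S" by (simp add: C_def)
      moreover have "h * C / S \<in> closed_segment (h * (1 + C) / S) \<eta>"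
      proof -
        have "h * (1 + C) / S = h * C / S + h / S" by (simp add: add_divide_distrib algebra_simps)
        thus ?thesis using etaS hS unfolding closed_segment_eq_real_ivl by simp
      qed
      ultimately show ?thesis unfolding seg e by (simp add: C_def)
    qed
    hence "x \<in> closed_segment (V + u' * Complex (h * (1 + C) / S) (-h)) (V + u' * Complex \<eta> (-h))"
      using frame_seg[OF u'] by blast
    ultimately show "x \<in> closed_segment (V + u' * Complex (h * (1 + C) / S) (-h)) (V + u' * Complex \<eta> (-h))
          \<and> x \<in> closed_segment (V - of_real L * u) V" by blast
  qed
qed

lemma vmod_lemma:
  fixes v :: "nat \<Rightarrow> 'a" and n m :: nat
  assumes "\<forall>k. v (k + n) = v k" shows "v m = v (m mod n)"
proof -
  have q: "v (k + q * n) = v k" for k q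
  proof (induction q)
    case 0 then show ?case by simp
  next
    case (Suc q)
    have "v (k + Suc q * n) = v ((k + q * n) + n)" by (simp add: algebra_simps)
    also have "\<dots> = v (k + q * n)" using assms by blast
    finally show ?case using Suc by simp
  qed
  have "m = m mod n + (m div n) * n" by simp
  hence "v m = v (m mod n + (m div n) * n)" by (metis)
  also have "\<dots> = v (m mod n)" by (rule q)
  finally show ?thesis .
qed

lemma seg_near:
  fixes A B d1 d2 x :: complex
  assumes "x \<in> closed_segment (A + d1) (B + d2)" "cmod d1 \<le> r" "cmod d2 \<le> r"
  shows "\<exists>q\<in>closed_segment A B. dist x q \<le> r"
proof -
  obtain t where t: "0 \<le> t" "t \<le> 1" "x = (1 - t) *\<^sub>R (A + d1) + t *\<^sub>R (B + d2)"
    using assms(1) unfolding in_segment by blast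
  define q where "q = (1 - t) *\<^sub>R A + t *\<^sub>R B"
  have q: "q \<in> closed_segment A B" unfolding q_def in_segment using t by blast
  have "x - q = (1 - t) *\<^sub>R d1 + t *\<^sub>R d2" unfolding t(3) q_def by (simp add: algebra_simps)
  hence "dist x q \<le> norm ((1 - t) *\<^sub>R d1) + norm (t *\<^sub>R d2)"
    by (metis dist_norm norm_triangle_ineq)
  also have "\<dots> = (1 - t) * cmod d1 + t * cmod d2" using t by simp
  also have "\<dots> \<le> (1 - t) * r + t * r"
    using t assms(2,3) by (intro add_mono mult_left_mono) auto
  also have "\<dots> = r" by (simp add: algebra_simps)
  finally show ?thesis using q by blast
qed

lemma far_gen:
  fixes A B d1 d2 :: complex and F :: "complex set"
  assumes sep: "\<forall>x\<in>closed_segment A B. \<forall>y\<in>F. \<delta> \<le> dist x y"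
    and "cmod d1 \<le> r" "cmod d2 \<le> r" "r < \<delta>"
  shows "closed_segment (A + d1) (B + d2) \<inter> F = {}"
proof (rule ccontr)
  assume "closed_segment (A + d1) (B + d2) \<inter> F \<noteq> {}"
  then obtain x where x: "x \<in> closed_segment (A + d1) (B + d2)" "x \<in> F" by blast
  obtain q where q: "q \<in> closed_segment A B" "dist x q \<le> r" using seg_near[OF x(1) assms(2,3)] by blast
  have "\<delta> \<le> dist q x" using sep q(1) x(2) by blast
  thus False using q(2) assms(4) by (simp add: dist_commute)
qed

lemma cross_anti: "cross a b = - cross b a"
  unfolding cross_def by (simp add: algebra_simps)

lemma hb: fixes h W X Y M :: real
  assumes "\<bar>h\<bar> = W" "\<bar>X / Y\<bar> \<le> M"
  shows "-(W*M) \<le> h * X / Y \<and> h * X / Y \<le> W * M"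
proof -
  have "\<bar>h * X / Y\<bar> = W * \<bar>X / Y\<bar>" using assms(1) by (simp add: abs_mult abs_divide)
  also have "\<dots> \<le> W * M" using assms by (intro mult_left_mono) auto
  finally show ?thesis using abs_le_iff[of "h*X/Y" "W*M"] by linarith
qed

lemma nb: fixes w :: complex and h h' W X Y M :: real
  assumes "cmod w = 1" "\<bar>h\<bar> = W" "\<bar>h'\<bar> = W" "1 + \<bar>X / Y\<bar> \<le> M"
  shows "cmod (w * Complex (h * X / Y) h') \<le> W * M"
proof -
  have "cmod (w * Complex (h * X / Y) h') = cmod (Complex (h * X / Y) h')" using assms(1) by (simp add: norm_mult)
  also have "\<dots> \<le> \<bar>h * X / Y\<bar> + \<bar>h'\<bar>" using cmod_le[of "Complex (h * X / Y) h'"] by simp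
  also have "\<dots> = W * (1 + \<bar>X / Y\<bar>)" using assms(2,3) by (simp add: abs_mult abs_divide algebra_simps)
  also have "\<dots> \<le> W * M" using assms(2,4) by (intro mult_left_mono) auto
  finally show ?thesis .
qed

lemma cmod_Complex_le: "cmod (Complex x y) \<le> \<bar>x\<bar> + \<bar>y\<bar>"
  using cmod_le[of "Complex x y"] by simp

theorem lemma4p3:
  fixes v :: "nat \<Rightarrow> complex" and n i :: nat and abv :: "nat \<Rightarrow> nat \<Rightarrow> bool"
    and a b :: complex and s :: real
  assumes even: "even n" and n3: "n \<ge> 3"
    and periodic: "\<forall>k. v (k + n) = v k"
    and nondeg: "\<forall>k. v (Suc k) \<noteq> v k"
    and layers: "\<forall>j<n. \<forall>k<n. j \<noteq> k \<longrightarrow> (abv j k \<longleftrightarrow> \<not> abv k j)"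
    and fold1: "cross (edir v i) (edir v (i + 1)) \<noteq> 0"
    and fold2: "cross (edir v (i + 1)) (edir v (i + 2)) \<noteq> 0"
    and a_in: "a \<in> open_segment (v i) (v (i + 1))"
    and b_in: "b \<in> open_segment (v (i + 2)) (v (i + 3))"
    and simple_other: "\<forall>k<n. k \<notin> {i mod n, (i + 1) mod n, (i + 2) mod n} \<longrightarrow>
        closed_segment (v k) (v (Suc k)) \<inter>
          (closed_segment a (v (i + 1)) \<union> closed_segment (v (i + 1)) (v (i + 2))
           \<union> closed_segment (v (i + 2)) b) = {}"
    and simple_first: "closed_segment (v i) (v (i + 1)) \<inter>
          (closed_segment a (v (i + 1)) \<union> closed_segment (v (i + 1)) (v (i + 2))
           \<union> closed_segment (v (i + 2)) b) = closed_segment a (v (i + 1))"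
    and simple_last: "closed_segment (v (i + 2)) (v (i + 3)) \<inter>
          (closed_segment a (v (i + 1)) \<union> closed_segment (v (i + 1)) (v (i + 2))
           \<union> closed_segment (v (i + 2)) b) = closed_segment (v (i + 2)) b"
    and simple_ends: "closed_segment a (v (i + 1)) \<inter> closed_segment (v (i + 2)) b = {}"
    and s: "s = 1 \<or> s = -1"
  shows "\<exists>w0>0. \<forall>w. 0 < w \<and> w < w0 \<longrightarrow>
           (piece_contribution v n abv s w i a b \<in> {1, -1} \<longleftrightarrow>
            fold_sign v n abv (i + 1) = fold_sign v n abv (i + 2))"
proof -
  have vm: "\<And>m. v m = v (m mod n)" using vmod_lemma[OF periodic] by blast
  have n0: "n > 0" using n3 by simp
  have em: "\<And>m. edir v (m mod n) = edir v m"
  proof -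
    fix m
    have "v (Suc (m mod n)) = v (Suc m)" using vm[of "Suc (m mod n)"] vm[of "Suc m"] by (simp add: mod_Suc_eq)
    moreover have "v (m mod n) = v m" using vm[of m] by simp
    ultimately show "edir v (m mod n) = edir v m" by (simp add: edir_def)
  qed
  have segm: "\<And>m. closed_segment (v (m mod n)) (v (Suc (m mod n))) = closed_segment (v m) (v (Suc m))"
  proof -
    fix m
    have "v (Suc (m mod n)) = v (Suc m)" using vm[of "Suc (m mod n)"] vm[of "Suc m"] by (simp add: mod_Suc_eq)
    moreover have "v (m mod n) = v m" using vm[of m] by simp
    ultimately show "closed_segment (v (m mod n)) (v (Suc (m mod n))) = closed_segment (v m) (v (Suc m))" by simp
  qed
  define u where "u = unitdir v"
  define L where "L = (\<lambda>j. cmod (edir v j))"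
  have Lpos: "\<And>j. L j > 0" using nondeg by (simp add: L_def edir_def)
  have un: "\<And>j. cmod (u j) = 1" using Lpos by (simp add: u_def unitdir_def L_def norm_divide)
  have ev: "\<And>j. edir v j = of_real (L j) * u j" using Lpos by (simp add: u_def unitdir_def L_def)
  have vs: "\<And>j. v (Suc j) = v j + of_real (L j) * u j" using ev by (simp add: edir_def algebra_simps)
  have ln: "\<And>j. lnormal v j = \<i> * u j" by (simp add: lnormal_def u_def)
  have ucnj: "\<And>j. u j * cnj (u j) = 1" using unit_cnj[OF un] by (simp add: mult.commute)
  have cr: "\<And>j k. cross (edir v j) (edir v k) = L j * L k * Im (cnj (u j) * u k)"
    unfolding ev cross_def by (simp add: algebra_simps)
  define \<rho>1 where "\<rho>1 = cnj (u i) * u (i+1)"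
  define \<rho>2 where "\<rho>2 = cnj (u (i+1)) * u (i+2)"
  define S1 where "S1 = Im \<rho>1"
  define S2 where "S2 = Im \<rho>2"
  define C1 where "C1 = Re \<rho>1"
  define C2 where "C2 = Re \<rho>2"
  have S1: "S1 \<noteq> 0" using fold1 cr[of i "i+1"] by (simp add: S1_def \<rho>1_def)
  have S2: "S2 \<noteq> 0" using fold2 cr[of "i+1" "i+2"] by (simp add: S2_def \<rho>2_def)
  have fd1a: "fold_dir v (i+1) = u i * (1 + \<rho>1)"
    using ucnj[of i] by (simp add: fold_dir_def u_def[symmetric] \<rho>1_def algebra_simps)
  have fd1b: "fold_dir v (i+1) = u (i+1) * (1 + cnj \<rho>1)"
    using ucnj[of "i+1"] by (simp add: fold_dir_def u_def[symmetric] \<rho>1_def algebra_simps)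
  have fd2a: "fold_dir v (i+2) = u (i+1) * (1 + \<rho>2)"
    using ucnj[of "i+1"] by (simp add: fold_dir_def u_def[symmetric] \<rho>2_def algebra_simps)
  have fd2b: "fold_dir v (i+2) = u (i+2) * (1 + cnj \<rho>2)"
    using ucnj[of "i+2"] by (simp add: fold_dir_def u_def[symmetric] \<rho>2_def algebra_simps)
  have md: "\<And>m d. 0 < d \<Longrightarrow> d < n \<Longrightarrow> (m + d) mod n \<noteq> m mod n"
  proof
    fix m d :: nat assume d: "0 < d" "d < n" and e: "(m + d) mod n = m mod n"
    have "n dvd (m + d - m)" using e mod_eq_dvd_iff_nat[of m "m+d" n] by simp
    hence "n dvd d" by simp
    thus False using d by (meson nat_dvd_not_less)
  qed
  have m01: "(i+1) mod n \<noteq> i mod n" using md[of 1 i] n3 by simp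
  have m02: "(i+2) mod n \<noteq> i mod n" using md[of 2 i] n3 by simp
  have m12: "(i+2) mod n \<noteq> (i+1) mod n" using md[of 1 "i+1"] n3 by (simp add: add.assoc)
  obtain \<alpha> where al: "\<alpha> > 0" "a = v (i+1) - of_real \<alpha> * u i"
  proof -
    obtain t where t: "0 < t" "t < 1" "a = (1 - t) *\<^sub>R v i + t *\<^sub>R v (i+1)"
      using a_in unfolding in_segment by blast
    have "a = v (i+1) - of_real ((1 - t) * L i) * u i"
      using t(3) vs[of i] by (simp add: scaleR_conv_of_real algebra_simps)
    moreover have "(1 - t) * L i > 0" using t Lpos[of i] by simp
    ultimately show ?thesis using that by blast
  qed
  obtain \<beta> where be: "\<beta> > 0" "b = v (i+2) + of_real \<beta> * u (i+2)"
  proof -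
    obtain t where t: "0 < t" "t < 1" "b = (1 - t) *\<^sub>R v (i+2) + t *\<^sub>R v (i+3)"
      using b_in unfolding in_segment by blast
    have "v (i+3) = v (i+2) + of_real (L (i+2)) * u (i+2)" using vs[of "i+2"] by (simp add: numeral_3_eq_3)
    hence "b = v (i+2) + of_real (t * L (i+2)) * u (i+2)"
      using t(3) by (simp add: scaleR_conv_of_real algebra_simps)
    moreover have "t * L (i+2) > 0" using t Lpos[of "i+2"] by simp
    ultimately show ?thesis using that by blast
  qed
  define E where "E = (\<lambda>k. closed_segment (v k) (v (Suc k)))"
  have Em: "\<And>m. E (m mod n) = E m" using segm by (simp add: E_def)
  have E3: "E (i+2) = closed_segment (v (i+2)) (v (i+3))" by (simp add: E_def numeral_3_eq_3)
  define D where "D = closed_segment a (v (i + 1)) \<union> closed_segment (v (i + 1)) (v (i + 2))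
           \<union> closed_segment (v (i + 2)) b"
  have clE: "\<And>K. finite K \<Longrightarrow> closed (\<Union> (E ` K))"
    by (intro closed_Union) (auto simp: E_def compact_imp_closed)
  define F1 where "F1 = \<Union> (E ` {k. k < n \<and> k \<noteq> i mod n \<and> k \<noteq> (i+1) mod n})"
  define F2 where "F2 = \<Union> (E ` {k. k < n \<and> k \<notin> {i mod n, (i+1) mod n, (i+2) mod n}})"
  define F3 where "F3 = \<Union> (E ` {k. k < n \<and> k \<noteq> (i+1) mod n \<and> k \<noteq> (i+2) mod n})"
  have far: "\<And>k. k < n \<Longrightarrow> k \<notin> {i mod n, (i+1) mod n, (i+2) mod n} \<Longrightarrow> E k \<inter> D = {}"
    using simple_other by (simp add: E_def D_def)
  have dj1: "closed_segment a (v (i+1)) \<inter> F1 = {}"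
  proof -
    have "closed_segment a (v (i+1)) \<inter> E k = {}" if "k < n" "k \<noteq> i mod n" "k \<noteq> (i+1) mod n" for k
    proof (cases "k = (i+2) mod n")
      case True
      hence "E k = E (i+2)" using Em by simp
      hence "E k \<inter> D = closed_segment (v (i + 2)) b" using simple_last E3 by (simp add: D_def)
      thus ?thesis using simple_ends by (auto simp: D_def)
    next
      case False
      thus ?thesis using far[of k] that by (auto simp: D_def)
    qed
    thus ?thesis by (auto simp: F1_def)
  qed
  have dj2: "closed_segment (v (i+1)) (v (i+2)) \<inter> F2 = {}"
    using far by (auto simp: F2_def D_def)
  have dj3: "closed_segment (v (i+2)) b \<inter> F3 = {}"
  proof -
    have "closed_segment (v (i+2)) b \<inter> E k = {}" if "k < n" "k \<noteq> (i+1) mod n" "k \<noteq> (i+2) mod n" for k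
    proof (cases "k = i mod n")
      case True
      hence "E k = E i" using Em by simp
      moreover have "E i \<inter> D = closed_segment a (v (i + 1))" using simple_first by (simp add: D_def E_def)
      ultimately have "E k \<inter> D = closed_segment a (v (i + 1))" by simp
      thus ?thesis using simple_ends by (auto simp: D_def)
    next
      case False
      thus ?thesis using far[of k] that by (auto simp: D_def)
    qed
    thus ?thesis by (auto simp: F3_def)
  qed
  obtain \<delta>1 where d1: "\<delta>1 > 0" "\<forall>x\<in>closed_segment a (v (i+1)). \<forall>y\<in>F1. \<delta>1 \<le> dist x y"
    using separate_compact_closed[OF compact_segment _ dj1] clE unfolding F1_def by auto
  obtain \<delta>2 where d2: "\<delta>2 > 0" "\<forall>x\<in>closed_segment (v (i+1)) (v (i+2)). \<forall>y\<in>F2. \<delta>2 \<le> dist x y"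
    using separate_compact_closed[OF compact_segment _ dj2] clE unfolding F2_def by auto
  obtain \<delta>3 where d3: "\<delta>3 > 0" "\<forall>x\<in>closed_segment (v (i+2)) b. \<forall>y\<in>F3. \<delta>3 \<le> dist x y"
    using separate_compact_closed[OF compact_segment _ dj3] clE unfolding F3_def by auto
  have sgn_gen: "xsign v n abv j ((j+1) mod n) = of_int (fold_sign v n abv (j+1)) \<and>
      xsign v n abv (j+1) (j mod n) = of_int (fold_sign v n abv (j+1))"
    if X: "cross (edir v j) (edir v (j+1)) \<noteq> 0"
      and ab: "abv ((j+1) mod n) (j mod n) \<longleftrightarrow> \<not> abv (j mod n) ((j+1) mod n)" for j
  proof -
    have ca: "cross (edir v (j+1)) (edir v j) = - cross (edir v j) (edir v (j+1))" by (rule cross_anti)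
    show ?thesis
      unfolding xsign_def fold_sign_def left_fold_def underfold_def em ab ca
      using X by (cases "abv (j mod n) ((j+1) mod n)"; cases "cross (edir v j) (edir v (j+1)) > 0") (auto simp: sgn_if)
  qed
  have lay: "\<And>p q. p < n \<Longrightarrow> q < n \<Longrightarrow> p \<noteq> q \<Longrightarrow> abv q p \<longleftrightarrow> \<not> abv p q"
    using layers by blast
  have sg1: "xsign v n abv i ((i+1) mod n) = of_int (fold_sign v n abv (i+1)) \<and>
      xsign v n abv (i+1) (i mod n) = of_int (fold_sign v n abv (i+1))"
    using sgn_gen[OF fold1] lay[of "i mod n" "(i+1) mod n"] m01 n0 by auto
  have sg2: "xsign v n abv (i+1) ((i+2) mod n) = of_int (fold_sign v n abv (i+2)) \<and>
      xsign v n abv (i+2) ((i+1) mod n) = of_int (fold_sign v n abv (i+2))"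
    using sgn_gen[of "i+1"] fold2 lay[of "(i+1) mod n" "(i+2) mod n"] m12 n0 by (auto simp: add.assoc)
  define M where "M = 1 + \<bar>(1 + C1) / S1\<bar> + \<bar>(1 + C2) / S2\<bar> + \<bar>1 / S1\<bar> + \<bar>1 / S2\<bar> + \<bar>C1 / S1\<bar> + \<bar>C2 / S2\<bar>"
  define \<mu> where "\<mu> = min (min \<alpha> \<beta>) (min (min (L i) (L (i+1))) (min (L (i+2)) (min \<delta>1 (min \<delta>2 \<delta>3))))"
  have M1: "M \<ge> 1" by (simp add: M_def)
  have mu0: "\<mu> > 0" using al be d1 d2 d3 Lpos by (simp add: \<mu>_def)
  show ?thesis
  proof (intro exI[of _ "\<mu> / M"] conjI allI impI)
    show "\<mu> / M > 0" using mu0 M1 by simp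
    fix w assume w: "0 < w \<and> w < \<mu> / M"
    define h where "h = boff s w i"
    define W where "W = w / 2"
    have hW: "\<bar>h\<bar> = W" using s w by (auto simp: h_def W_def boff_def abs_mult)
    have h0: "h \<noteq> 0" using hW w by (auto simp: W_def)
    have W0: "W \<ge> 0" using w by (simp add: W_def)
    have hi1: "boff s w (i+1) = - h" by (simp add: h_def boff_def)
    have hi2: "boff s w (i+2) = h" by (simp add: h_def boff_def)
    have small: "2 * (W * M) < \<mu>" using w M1 by (simp add: W_def pos_less_divide_eq)
    show "piece_contribution v n abv s w i a b \<in> {1, -1} \<longleftrightarrow>
            fold_sign v n abv (i + 1) = fold_sign v n abv (i + 2)"
    proof -
      have P1: "bfold v s w i (i+1) = v (i+1) + u i * Complex (h * (1 + C1) / S1) h"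
      proof -
        have "bfold v s w i (i+1) = line_meet (v i + of_real h * (\<i> * u i)) (u i) (v (i+1)) (u i * (1 + \<rho>1))"
          unfolding bfold_def ln fd1a h_def[symmetric] u_def[symmetric] ..
        also have "\<dots> = v (i+1) + u i * Complex (h * Re (1 + \<rho>1) / Im (1 + \<rho>1)) h"
          by (rule lm_core) (use un S1 vs[of i] in \<open>auto simp: S1_def\<close>)
        finally show ?thesis by (simp add: C1_def S1_def)
      qed
      have P1': "bfold v s w (i+1) (i+1) = v (i+1) + u (i+1) * Complex (h * (1 + C1) / S1) (-h)"
      proof -
        have "bfold v s w (i+1) (i+1) = line_meet (v (i+1) + of_real (-h) * (\<i> * u (i+1))) (u (i+1)) (v (i+1)) (u (i+1) * (1 + cnj \<rho>1))"
          unfolding bfold_def ln fd1b hi1 u_def[symmetric] ..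
        also have "\<dots> = v (i+1) + u (i+1) * Complex ((-h) * Re (1 + cnj \<rho>1) / Im (1 + cnj \<rho>1)) (-h)"
          by (rule lm_core[where lam=0]) (use un S1 in \<open>auto simp: S1_def\<close>)
        finally show ?thesis by (simp add: C1_def S1_def)
      qed
      have P2: "bfold v s w (i+1) (i+2) = v (i+2) + u (i+1) * Complex ((-h) * (1 + C2) / S2) (-h)"
      proof -
        have "bfold v s w (i+1) (i+2) = line_meet (v (i+1) + of_real (-h) * (\<i> * u (i+1))) (u (i+1)) (v (i+2)) (u (i+1) * (1 + \<rho>2))"
          unfolding bfold_def ln fd2a hi1 u_def[symmetric] ..
        also have "\<dots> = v (i+2) + u (i+1) * Complex ((-h) * Re (1 + \<rho>2) / Im (1 + \<rho>2)) (-h)"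
          by (rule lm_core) (use un S2 vs[of "i+1"] in \<open>auto simp: S2_def\<close>)
        finally show ?thesis by (simp add: C2_def S2_def)
      qed
      have P2': "bfold v s w (i+2) (i+2) = v (i+2) + u (i+2) * Complex ((-h) * (1 + C2) / S2) h"
      proof -
        have "bfold v s w (i+2) (i+2) = line_meet (v (i+2) + of_real h * (\<i> * u (i+2))) (u (i+2)) (v (i+2)) (u (i+2) * (1 + cnj \<rho>2))"
          unfolding bfold_def ln fd2b hi2 u_def[symmetric] ..
        also have "\<dots> = v (i+2) + u (i+2) * Complex (h * Re (1 + cnj \<rho>2) / Im (1 + cnj \<rho>2)) h"
          by (rule lm_core[where lam=0]) (use un S2 in \<open>auto simp: S2_def\<close>)
        finally show ?thesis by (simp add: C2_def S2_def)
      qed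
      define bs where "bs = piece_bseg v s w i a b"
      have bs1: "bs i = closed_segment (a + of_real h * (\<i> * u i)) (v (i+1) + u i * Complex (h * (1 + C1) / S1) h)"
        unfolding bs_def piece_bseg_def P1 by (simp add: h_def ln)
      have bs2: "bs (i+1) = closed_segment (v (i+1) + u (i+1) * Complex (h * (1 + C1) / S1) (-h))
                    (v (i+2) + u (i+1) * Complex ((-h) * (1 + C2) / S2) (-h))"
        unfolding bs_def piece_bseg_def P1' P2 by simp
      have bs3: "bs (i+2) = closed_segment (v (i+2) + u (i+2) * Complex ((-h) * (1 + C2) / S2) h)
                    (b + of_real h * (\<i> * u (i+2)))"
        unfolding bs_def piece_bseg_def P2' ln hi2 by simp
      have hW': "\<bar>-h\<bar> = W" using hW by simp
      have muL: "\<mu> \<le> \<alpha>" "\<mu> \<le> \<beta>" "\<mu> \<le> L i" "\<mu> \<le> L (i+1)" "\<mu> \<le> L (i+2)"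
        "\<mu> \<le> \<delta>1" "\<mu> \<le> \<delta>2" "\<mu> \<le> \<delta>3" unfolding \<mu>_def by (simp_all add: min_le_iff_disj)
      have Mb: "\<bar>(1 + C1) / S1\<bar> \<le> M" "\<bar>(1 + C2) / S2\<bar> \<le> M" "\<bar>1 / S1\<bar> \<le> M" "\<bar>1 / S2\<bar> \<le> M"
        "\<bar>C1 / S1\<bar> \<le> M" "\<bar>C2 / S2\<bar> \<le> M"
        "1 + \<bar>(1 + C1) / S1\<bar> \<le> M" "1 + \<bar>(1 + C2) / S2\<bar> \<le> M" by (auto simp: M_def)
      have b_h1: "\<bar>h / S1\<bar> \<le> W * M" using hb[OF hW Mb(3)] abs_le_iff[of "h / S1" "W * M"] by simp
      have b_h2: "\<bar>-h / S2\<bar> \<le> W * M" using hb[OF hW' Mb(4)] abs_le_iff[of "-h / S2" "W * M"] by simp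
      note b_c1 = hb[OF hW Mb(5)]
      note b_c2 = hb[OF hW' Mb(6)]
      note b_k1 = hb[OF hW Mb(1)]
      note b_k2 = hb[OF hW' Mb(2)]
      have v2: "v (i+2) = v (i+1) + of_real (L (i+1)) * u (i+1)" using vs[of "i+1"] by simp
      have F1in: "(x \<in> bs i \<and> x \<in> E (i+1)) \<longleftrightarrow> (h * S1 > 0 \<and> x = v (i+1) + of_real (h / S1) * u (i+1))" for x
      proof -
        have A: "a + of_real h * (\<i> * u i) = v (i+1) + u i * Complex (-\<alpha>) h"
          using al(2) by (simp add: Complex_eq algebra_simps)
        have Ei: "E (i+1) = closed_segment (v (i+1)) (v (i+1) + of_real (L (i+1)) * u (i+1))"
          using vs[of "i+1"] by (simp add: E_def)
        show ?thesis unfolding bs1 A Ei C1_def S1_def \<rho>1_def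
          by (rule fold_in) (use un S1 h0 b_h1 b_c1 small muL in \<open>auto simp: \<rho>1_def C1_def S1_def\<close>)
      qed
      have F1out: "(x \<in> bs (i+1) \<and> x \<in> E i) \<longleftrightarrow> (h * S1 < 0 \<and> x = v (i+1) + of_real (h / S1) * u i)" for x
      proof -
        have Y: "v (i+2) + u (i+1) * Complex ((-h) * (1 + C2) / S2) (-h) = v (i+1) + u (i+1) * Complex (L (i+1) + (-h) * (1 + C2) / S2) (-h)"
          unfolding v2 by (simp add: Complex_eq algebra_simps)
        have Ei: "E i = closed_segment (v (i+1) - of_real (L i) * u i) (v (i+1))"
          using vs[of i] by (simp add: E_def)
        show ?thesis unfolding bs2 Y Ei C1_def S1_def \<rho>1_def
          by (rule fold_out) (use un S1 h0 b_h1 b_c1 b_k2 small muL in \<open>auto simp: \<rho>1_def C1_def S1_def\<close>)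
      qed
      have F2in: "(x \<in> bs (i+1) \<and> x \<in> E (i+2)) \<longleftrightarrow> ((-h) * S2 > 0 \<and> x = v (i+2) + of_real ((-h) / S2) * u (i+2))" for x
      proof -
        have X: "v (i+1) + u (i+1) * Complex (h * (1 + C1) / S1) (-h) = v (i+2) + u (i+1) * Complex (-L (i+1) + h * (1 + C1) / S1) (-h)"
          unfolding v2 by (simp add: Complex_eq algebra_simps)
        have Ei: "E (i+2) = closed_segment (v (i+2)) (v (i+2) + of_real (L (i+2)) * u (i+2))"
          using vs[of "i+2"] by (simp add: E_def)
        show ?thesis unfolding bs2 X Ei C2_def S2_def \<rho>2_def
          by (rule fold_in) (use un S2 h0 b_h2 b_c2 b_k1 small muL in \<open>auto simp: \<rho>2_def C2_def S2_def\<close>)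
      qed
      have F2out: "(x \<in> bs (i+2) \<and> x \<in> E (i+1)) \<longleftrightarrow> ((-h) * S2 < 0 \<and> x = v (i+2) + of_real ((-h) / S2) * u (i+1))" for x
      proof -
        have Y: "b + of_real h * (\<i> * u (i+2)) = v (i+2) + u (i+2) * Complex \<beta> (- (-h))"
          using be(2) by (simp add: Complex_eq algebra_simps)
        have X: "v (i+2) + u (i+2) * Complex ((-h) * (1 + C2) / S2) h = v (i+2) + u (i+2) * Complex ((-h) * (1 + C2) / S2) (- (-h))"
          by simp
        have Ei: "E (i+1) = closed_segment (v (i+2) - of_real (L (i+1)) * u (i+1)) (v (i+2))"
          using v2 by (simp add: E_def)
        show ?thesis unfolding bs3 Y X Ei unfolding C2_def S2_def \<rho>2_def
          by (rule fold_out) (use un S2 h0 b_h2 b_c2 small muL in \<open>auto simp: \<rho>2_def C2_def S2_def\<close>)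
      qed
      have WM: "W \<le> W * M" using W0 M1 by (simp add: mult_le_cancel_left1)
      have WM0: "0 \<le> W * M" using W0 M1 by simp
      have WMd1: "W * M < \<delta>1" using small muL WM0 by linarith
      have WMd2: "W * M < \<delta>2" using small muL WM0 by linarith
      have WMd3: "W * M < \<delta>3" using small muL WM0 by linarith
      note WMd = WMd1 WMd2 WMd3
      have nh: "\<And>j. cmod (of_real h * (\<i> * u j)) \<le> W * M" using un hW WM by (simp add: norm_mult)
      have Far1: "bs i \<inter> E k = {}" if "k < n" "k \<noteq> i mod n" "k \<noteq> (i+1) mod n" for k
      proof -
        have "bs i \<inter> F1 = {}" unfolding bs1
          by (rule far_gen[OF d1(2) nh nb[OF un hW hW Mb(7)] WMd(1)])
        moreover have "E k \<subseteq> F1" using that by (auto simp: F1_def)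
        ultimately show ?thesis by blast
      qed
      have Far2: "bs (i+1) \<inter> E k = {}" if "k < n" "k \<notin> {i mod n, (i+1) mod n, (i+2) mod n}" for k
      proof -
        have "bs (i+1) \<inter> F2 = {}" unfolding bs2
          by (rule far_gen[OF d2(2) nb[OF un hW hW' Mb(7)] nb[OF un hW' hW' Mb(8)] WMd(2)])
        moreover have "E k \<subseteq> F2" using that by (auto simp: F2_def)
        ultimately show ?thesis by blast
      qed
      have Far3: "bs (i+2) \<inter> E k = {}" if "k < n" "k \<noteq> (i+1) mod n" "k \<noteq> (i+2) mod n" for k
      proof -
        have "bs (i+2) \<inter> F3 = {}" unfolding bs3
          by (rule far_gen[OF d3(2) nb[OF un hW' hW Mb(8)] nh WMd(3)])
        moreover have "E k \<subseteq> F3" using that by (auto simp: F3_def)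
        ultimately show ?thesis by blast
      qed
      define x1 where "x1 = v (i+1) + of_real (h / S1) * u (i+1)"
      define x1' where "x1' = v (i+1) + of_real (h / S1) * u i"
      define x2 where "x2 = v (i+2) + of_real ((-h) / S2) * u (i+2)"
      define x2' where "x2' = v (i+2) + of_real ((-h) / S2) * u (i+1)"
      define c1 where "c1 = (if h * S1 > 0 then (i, (i+1) mod n, x1) else (i+1, i mod n, x1'))"
      define c2 where "c2 = (if (-h) * S2 > 0 then (i+1, (i+2) mod n, x2) else (i+2, (i+1) mod n, x2'))"
      have hS1: "h * S1 \<noteq> 0" using h0 S1 by simp
      have hS2: "(-h) * S2 \<noteq> 0" using h0 S2 by simp
      define PC where "PC = piece_crossings v n s w i a b"
      have mem: "(j, k, x) \<in> PC \<longleftrightarrow> j \<in> {i, i+1, i+2} \<and> k < n \<and> k \<noteq> j mod n \<and> x \<in> bs j \<and> x \<in> E k" for j k x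
        by (simp add: PC_def piece_crossings_def bs_def E_def)
      have ii: "i + 1 \<noteq> i" "i + 2 \<noteq> i" "i + 2 \<noteq> i + 1" by auto
      have c1in: "c1 \<in> PC"
      proof (cases "h * S1 > 0")
        case True
        hence "x1 \<in> bs i \<and> x1 \<in> E (i+1)" using F1in by (simp add: x1_def)
        thus ?thesis using True m01 n0 Em[of "i+1"] by (simp add: c1_def mem)
      next
        case False
        hence "h * S1 < 0" using hS1 by (metis linorder_neqE_linordered_idom)
        hence "x1' \<in> bs (i+1) \<and> x1' \<in> E i" using F1out by (simp add: x1'_def)
        thus ?thesis using False m01 n0 Em[of i] by (simp add: c1_def mem)
      qed
      have c2in: "c2 \<in> PC"
      proof (cases "(-h) * S2 > 0")
        case True
        hence "x2 \<in> bs (i+1) \<and> x2 \<in> E (i+2)" using F2in by (simp add: x2_def)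
        thus ?thesis using True m12 n0 Em[of "i+2"] by (simp add: c2_def mem)
      next
        case False
        hence "(-h) * S2 < 0" using hS2 by (metis linorder_neqE_linordered_idom)
        hence "x2' \<in> bs (i+2) \<and> x2' \<in> E (i+1)" using F2out by (simp add: x2'_def)
        thus ?thesis using False m12 n0 Em[of "i+1"] by (simp add: c2_def mem)
      qed
      have sub: "c \<in> {c1, c2}" if c: "c \<in> PC" for c
      proof -
        obtain j k x where jkx: "c = (j, k, x)" by (cases c) auto
        have J: "j \<in> {i, i+1, i+2}" and K: "k < n" "k \<noteq> j mod n" and X: "x \<in> bs j" "x \<in> E k"
          using c unfolding jkx mem by auto
        consider "j = i" | "j = i+1" | "j = i+2" using J by blast
        thus ?thesis
        proof cases
          case 1
          show ?thesis
          proof (cases "k = (i+1) mod n")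
            case True
            hence "x \<in> E (i+1)" using X Em by metis
            hence "h * S1 > 0 \<and> x = x1" using F1in[of x] X 1 unfolding x1_def by blast
            thus ?thesis using jkx 1 True by (simp add: c1_def)
          next
            case False
            thus ?thesis using Far1[of k] K X 1 by auto
          qed
        next
          case 2
          show ?thesis
          proof (cases "k = i mod n")
            case True
            hence "x \<in> E i" using X Em by metis
            hence "h * S1 < 0 \<and> x = x1'" using F1out[of x] X 2 unfolding x1'_def by blast
            thus ?thesis using jkx 2 True by (simp add: c1_def)
          next
            case False
            show ?thesis
            proof (cases "k = (i+2) mod n")
              case True
              hence "x \<in> E (i+2)" using X Em by metis
              hence "(-h) * S2 > 0 \<and> x = x2" using F2in[of x] X 2 unfolding x2_def by blast
              thus ?thesis using jkx 2 True by (simp add: c2_def)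
            next
              case False2: False
              thus ?thesis using Far2[of k] K X 2 False by auto
            qed
          qed
        next
          case 3
          show ?thesis
          proof (cases "k = (i+1) mod n")
            case True
            hence "x \<in> E (i+1)" using X Em by metis
            hence "(-h) * S2 < 0 \<and> x = x2'" using F2out[of x] X 3 unfolding x2'_def by blast
            thus ?thesis using jkx 3 True by (simp add: c2_def)
          next
            case False
            thus ?thesis using Far3[of k] K X 3 by auto
          qed
        qed
      qed
      have PCeq: "PC = {c1, c2}" using sub c1in c2in by blast
      have c12: "c1 \<noteq> c2" using m02 by (auto simp: c1_def c2_def)
      define f1 where "f1 = fold_sign v n abv (i + 1)"
      define f2 where "f2 = fold_sign v n abv (i + 2)"
      have xs1: "xsign v n abv (fst c1) (fst (snd c1)) = of_int f1"
        using sg1 by (simp add: c1_def f1_def)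
      have xs2: "xsign v n abv (fst c2) (fst (snd c2)) = of_int f2"
        using sg2 by (simp add: c2_def f2_def)
      have pc: "piece_contribution v n abv s w i a b = (of_int f1 + of_int f2) / 2"
        unfolding piece_contribution_def PC_def[symmetric] PCeq using c12 xs1 xs2 by simp
      have f1v: "f1 = 1 \<or> f1 = -1" by (simp add: f1_def fold_sign_def)
      have f2v: "f2 = 1 \<or> f2 = -1" by (simp add: f2_def fold_sign_def)
      show ?thesis unfolding pc f1_def[symmetric] f2_def[symmetric]
        using f1v f2v by auto
    qed
  qed
qed

end
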